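(* Let $\mathcal{D}=\{(X_i,B_i):i\in I\}$ be a collection of pairs, each consisting of a random variable $X_i$ on $\Omega$ and a nonempty event $B_i\subseteq\Omega$, equipped with coherent$_1$ conditional previsions $\{P(X_i\mid B_i):i\in I\}$, and suppose $\mathcal{D}$ contains every pair $(c,\Omega)$ with $c$ a real number (the constant random variable $c$). Let $\mathcal{F}$ be any set of random variable/nonempty event pairs with $\mathcal{D}\subseteq\mathcal{F}$. Then there exists an assignment of extended-real conditional previsions $P'(X\mid B)$ for all $(X,B)\in\mathcal{F}$ that agrees with $P$ on $\mathcal{D}$ and is coherent$_1$.
   Context: Let $\Omega$ be a nonempty set of states $\omega$; events are subsets of $\Omega$ and random variables are real-valued functions on $\Omega$. An event $B$ is identified with its indicator function. A conditional prevision $P(X\mid B)$ is an extended real number; $P(X\mid\Omega)$ is called a marginal prevision. Coherence$_1$: a collection $\{P(X_i\mid B_i):i\in I\}$ is coherent$_1$ if for every finite $\{i_1,\dots,i_n\}\subseteq I$, all real $\alpha_1,\dots,\alpha_n$ with $\alpha_j\ge 0$ whenever $P(X_{i_j}\mid B_{i_j})=+\infty$ and $\alpha_j\le 0$ whenever $P(X_{i_j}\mid B_{i_j})=-\infty$, and all real $c_1,\dots,c_n$ with $c_j=P(X_{i_j}\mid B_{i_j})$ whenever that prevision is finite, we have $\sup_\omega \sum_{j=1}^n \alpha_j B_{i_j}(\omega)[X_{i_j}(\omega)-c_j]\ge 0$. *)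

theory Defs
  imports "HOL-Analysis.Analysis"
begin

text \<open>States are elements of the type 'w (Omega = UNIV, automatically nonempty).\<close>

definition coherent1 ::
  "(('w \<Rightarrow> real) \<times> 'w set) set \<Rightarrow> (('w \<Rightarrow> real) \<times> 'w set \<Rightarrow> ereal) \<Rightarrow> bool" where
  "coherent1 D P \<longleftrightarrow>
     (\<forall>S \<alpha> c. finite S \<and> S \<subseteq> D
        \<and> (\<forall>p\<in>S. P p = \<infinity> \<longrightarrow> \<alpha> p \<ge> (0::real))
        \<and> (\<forall>p\<in>S. P p = -\<infinity> \<longrightarrow> \<alpha> p \<le> 0)
        \<and> (\<forall>p\<in>S. P p \<noteq> \<infinity> \<and> P p \<noteq> -\<infinity> \<longrightarrow> ereal (c p) = P p)
      \<longrightarrow> (SUP \<omega>. ereal (\<Sum>p\<in>S. \<alpha> p * indicator (snd p) \<omega> * (fst p \<omega> - c p))) \<ge> 0)"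

end

theory Submission
  imports Defs
begin

definition adm :: "(('w \<Rightarrow> real) \<times> 'w set) set \<Rightarrow> (('w \<Rightarrow> real) \<times> 'w set \<Rightarrow> ereal)
   \<Rightarrow> (('w \<Rightarrow> real) \<times> 'w set) set \<Rightarrow> (('w \<Rightarrow> real) \<times> 'w set \<Rightarrow> real)
   \<Rightarrow> (('w \<Rightarrow> real) \<times> 'w set \<Rightarrow> real) \<Rightarrow> bool" where
  "adm E Q S \<alpha> c \<longleftrightarrow> finite S \<and> S \<subseteq> E
        \<and> (\<forall>p\<in>S. Q p = \<infinity> \<longrightarrow> \<alpha> p \<ge> (0::real))
        \<and> (\<forall>p\<in>S. Q p = -\<infinity> \<longrightarrow> \<alpha> p \<le> 0)
        \<and> (\<forall>p\<in>S. Q p \<noteq> \<infinity> \<and> Q p \<noteq> -\<infinity> \<longrightarrow> ereal (c p) = Q p)"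

definition gam :: "(('w \<Rightarrow> real) \<times> 'w set) set \<Rightarrow> (('w \<Rightarrow> real) \<times> 'w set \<Rightarrow> real)
   \<Rightarrow> (('w \<Rightarrow> real) \<times> 'w set \<Rightarrow> real) \<Rightarrow> 'w \<Rightarrow> real" where
  "gam S \<alpha> c \<omega> = (\<Sum>p\<in>S. \<alpha> p * indicator (snd p) \<omega> * (fst p \<omega> - c p))"

definition negg :: "('w \<Rightarrow> real) \<Rightarrow> bool" where
  "negg f \<longleftrightarrow> (\<exists>e>0. \<forall>\<omega>. f \<omega> \<le> - e)"

lemma sup_iff: "0 \<le> (SUP \<omega>. ereal (f \<omega>)) \<longleftrightarrow> \<not> negg f"
proof
  assume h: "0 \<le> (SUP \<omega>. ereal (f \<omega>))"
  show "\<not> negg f"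
  proof
    assume "negg f"
    then obtain e where e: "e > 0" "\<And>\<omega>. f \<omega> \<le> -e" unfolding negg_def by blast
    have "(SUP \<omega>. ereal (f \<omega>)) \<le> ereal (-e)" by (rule SUP_least) (use e in auto)
    from order_trans[OF h this] e show False by simp
  qed
next
  assume h: "\<not> negg f"
  show "0 \<le> (SUP \<omega>. ereal (f \<omega>))"
  proof (rule ccontr)
    assume "\<not> 0 \<le> (SUP \<omega>. ereal (f \<omega>))"
    hence lt: "(SUP \<omega>. ereal (f \<omega>)) < 0" by auto
    obtain w0 :: 'a where True by blast
    have ge: "ereal (f \<omega>) \<le> (SUP \<omega>. ereal (f \<omega>))" for \<omega> by (rule SUP_upper) auto
    from ge[of w0] lt obtain r where r: "(SUP \<omega>. ereal (f \<omega>)) = ereal r" "r < 0"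
      by (cases "(SUP \<omega>. ereal (f \<omega>))") auto
    have "\<forall>\<omega>. f \<omega> \<le> - (-r)" using ge r by auto
    with r have "negg f" unfolding negg_def by (intro exI[of _ "-r"]) auto
    with h show False by blast
  qed
qed

lemma coh_iff: "coherent1 E Q \<longleftrightarrow> (\<forall>S \<alpha> c. adm E Q S \<alpha> c \<longrightarrow> \<not> negg (gam S \<alpha> c))"
  unfolding coherent1_def adm_def gam_def sup_iff[symmetric] by blast

lemma coh_cong: "coherent1 E Q1 \<Longrightarrow> (\<And>p. p \<in> E \<Longrightarrow> Q1 p = Q2 p) \<Longrightarrow> coherent1 E Q2"
  unfolding coherent1_def by (smt (verit) subsetD)

lemma adm_scale: "t > 0 \<Longrightarrow> adm E Q S \<alpha> c \<Longrightarrow> adm E Q S (\<lambda>p. t * \<alpha> p) c"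
  unfolding adm_def by (auto simp: mult_nonneg_nonpos)

lemma gam_scale: "gam S (\<lambda>p. t * \<alpha> p) c \<omega> = t * gam S \<alpha> c \<omega>"
  unfolding gam_def by (simp add: sum_distrib_left algebra_simps)

lemma adm_add:
  assumes a1: "adm E Q S1 \<alpha>1 c1" and a2: "adm E Q S2 \<alpha>2 c2"
  shows "\<exists>S \<alpha> c. adm E Q S \<alpha> c \<and> (\<forall>\<omega>. gam S \<alpha> c \<omega> = gam S1 \<alpha>1 c1 \<omega> + gam S2 \<alpha>2 c2 \<omega>)"
proof -
  define a1' where "a1' p = (if p \<in> S1 then \<alpha>1 p else 0)" for p
  define a2' where "a2' p = (if p \<in> S2 then \<alpha>2 p else 0)" for p
  define a where "a p = a1' p + a2' p" for p
  define c where "c p = (if Q p \<noteq> \<infinity> \<and> Q p \<noteq> -\<infinity> then real_of_ereal (Q p)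
      else if a p \<noteq> 0 then (a1' p * c1 p + a2' p * c2 p) / a p else 0)" for p
  define S where "S = S1 \<union> S2"
  have fin: "finite S1" "finite S2" using a1 a2 unfolding adm_def by auto
  have adm: "adm E Q S a c"
    unfolding adm_def
  proof (intro conjI ballI impI)
    show "finite S" "S \<subseteq> E" using a1 a2 unfolding adm_def S_def by auto
  next
    fix p assume "p \<in> S" "Q p = \<infinity>"
    thus "0 \<le> a p" using a1 a2 unfolding adm_def a_def a1'_def a2'_def by (auto intro: add_nonneg_nonneg)
  next
    fix p assume "p \<in> S" "Q p = -\<infinity>"
    thus "a p \<le> 0" using a1 a2 unfolding adm_def a_def a1'_def a2'_def by (auto intro: add_nonpos_nonpos)
  next
    fix p assume "p \<in> S" "Q p \<noteq> \<infinity> \<and> Q p \<noteq> -\<infinity>"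
    thus "ereal (c p) = Q p" unfolding c_def by (cases "Q p") auto
  qed
  have trm: "a1' p * (x - c1 p) + a2' p * (x - c2 p) = a p * (x - c p)" if "p \<in> S" for p x
  proof (cases "Q p \<noteq> \<infinity> \<and> Q p \<noteq> -\<infinity>")
    case True
    have e1: "a1' p * (x - c1 p) = a1' p * (x - c p)"
      using a1 True unfolding adm_def a1'_def c_def
      by (cases "p \<in> S1") (auto, metis real_of_ereal.simps(1))
    have e2: "a2' p * (x - c2 p) = a2' p * (x - c p)"
      using a2 True unfolding adm_def a2'_def c_def
      by (cases "p \<in> S2") (auto, metis real_of_ereal.simps(1))
    show ?thesis unfolding e1 e2 a_def by (simp add: algebra_simps)
  next
    case False
    hence sg: "(a1' p \<ge> 0 \<and> a2' p \<ge> 0) \<or> (a1' p \<le> 0 \<and> a2' p \<le> 0)"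
      using a1 a2 unfolding adm_def a1'_def a2'_def by auto
    show ?thesis
    proof (cases "a p = 0")
      case True
      with sg have "a1' p = 0" "a2' p = 0" unfolding a_def by auto
      thus ?thesis using True by simp
    next
      case nz: False
      have "c p = (a1' p * c1 p + a2' p * c2 p) / a p" using False nz unfolding c_def by auto
      thus ?thesis using nz unfolding a_def by (simp add: field_simps)
    qed
  qed
  have "gam S a c \<omega> = gam S1 \<alpha>1 c1 \<omega> + gam S2 \<alpha>2 c2 \<omega>" for \<omega>
  proof -
    have "gam S a c \<omega> = (\<Sum>p\<in>S. a1' p * indicator (snd p) \<omega> * (fst p \<omega> - c1 p))
        + (\<Sum>p\<in>S. a2' p * indicator (snd p) \<omega> * (fst p \<omega> - c2 p))"
      unfolding gam_def sum.distrib[symmetric]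
    proof (rule sum.cong[OF refl])
      fix p assume "p \<in> S"
      from trm[OF this, of "fst p \<omega>"]
      show "a p * indicator (snd p) \<omega> * (fst p \<omega> - c p) =
        a1' p * indicator (snd p) \<omega> * (fst p \<omega> - c1 p) + a2' p * indicator (snd p) \<omega> * (fst p \<omega> - c2 p)"
        by (metis (no_types, lifting) distrib_left mult.commute mult.left_commute)
    qed
    also have "(\<Sum>p\<in>S. a1' p * indicator (snd p) \<omega> * (fst p \<omega> - c1 p)) = gam S1 \<alpha>1 c1 \<omega>"
      unfolding gam_def S_def using fin
      by (intro sum.mono_neutral_cong_right) (auto simp: a1'_def)
    also have "(\<Sum>p\<in>S. a2' p * indicator (snd p) \<omega> * (fst p \<omega> - c2 p)) = gam S2 \<alpha>2 c2 \<omega>"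
      unfolding gam_def S_def using fin
      by (intro sum.mono_neutral_cong_right) (auto simp: a2'_def)
    finally show ?thesis .
  qed
  with adm show ?thesis by blast
qed


definition gams where "gams E Q = {g. \<exists>S \<alpha> c. adm E Q S \<alpha> c \<and> g = gam S \<alpha> c}"

lemma ext_coh:
  assumes coh: "coherent1 E Q" and q: "q \<notin> E"
    and H: "\<forall>g\<in>gams E Q. \<forall>a cq. (v = \<infinity> \<longrightarrow> a \<ge> 0) \<longrightarrow> (v = -\<infinity> \<longrightarrow> a \<le> 0)
       \<longrightarrow> (v \<noteq> \<infinity> \<and> v \<noteq> -\<infinity> \<longrightarrow> ereal cq = v)
       \<longrightarrow> \<not> negg (\<lambda>\<omega>. g \<omega> + a * indicator (snd q) \<omega> * (fst q \<omega> - cq))"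
  shows "coherent1 (insert q E) (Q(q:=v))"
  unfolding coh_iff
proof (intro allI impI)
  fix S \<alpha> c assume A: "adm (insert q E) (Q(q:=v)) S \<alpha> c"
  have A': "adm E Q (S - {q}) \<alpha> c" using A q unfolding adm_def by auto
  hence g: "gam (S-{q}) \<alpha> c \<in> gams E Q" unfolding gams_def by blast
  show "\<not> negg (gam S \<alpha> c)"
  proof (cases "q \<in> S")
    case True
    have fin: "finite S" using A unfolding adm_def by auto
    have eq: "gam S \<alpha> c = (\<lambda>\<omega>. gam (S-{q}) \<alpha> c \<omega> + \<alpha> q * indicator (snd q) \<omega> * (fst q \<omega> - c q))"
      by (rule ext) (simp add: gam_def sum.remove[OF fin True])
    have c1: "v = \<infinity> \<longrightarrow> \<alpha> q \<ge> 0" "v = -\<infinity> \<longrightarrow> \<alpha> q \<le> 0"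
      "v \<noteq> \<infinity> \<and> v \<noteq> -\<infinity> \<longrightarrow> ereal (c q) = v"
      using A True unfolding adm_def by auto
    show ?thesis unfolding eq using H g c1 by blast
  next
    case False
    hence "S - {q} = S" by auto
    with A' coh show ?thesis unfolding coh_iff by metis
  qed
qed

lemma pert:
  assumes "\<forall>\<omega>. g \<omega> + \<beta> * I \<omega> * (X \<omega> - x) \<le> -e" "e > 0" "\<beta> \<noteq> 0" "\<bar>y - x\<bar> < e/(2*\<bar>\<beta>\<bar>)"
    "\<forall>\<omega>. I \<omega> = 0 \<or> I \<omega> = (1::real)"
  shows "\<forall>\<omega>. g \<omega> + \<beta> * I \<omega> * (X \<omega> - y) \<le> -(e/2)"
proof
  fix \<omega>
  have 1: "\<beta> * I \<omega> * (X \<omega> - y) = \<beta> * I \<omega> * (X \<omega> - x) + \<beta> * I \<omega> * (x - y)"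
    by (simp add: algebra_simps)
  have 2: "\<beta> * I \<omega> * (x - y) \<le> \<bar>\<beta>\<bar> * \<bar>x - y\<bar>"
    using assms(5) by (metis abs_ge_self abs_mult mult.right_neutral mult_zero_left mult_zero_right abs_ge_zero mult_nonneg_nonneg order_trans)
  have "\<bar>\<beta>\<bar> * \<bar>x - y\<bar> < e/2"
    using assms(3,4) by (simp add: pos_less_divide_eq field_simps abs_minus_commute)
  with 1 2 spec[OF assms(1), of \<omega>] show "g \<omega> + \<beta> * I \<omega> * (X \<omega> - y) \<le> -(e/2)"
    by linarith
qed

lemma step:
  assumes coh: "coherent1 E Q" and q: "q \<notin> E"
  shows "\<exists>v. coherent1 (insert q E) (Q(q:=v))"
proof -
  define G where "G = gams E Q"
  define I where "I = (\<lambda>\<omega>. indicator (snd q) \<omega> :: real)"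
  define X where "X = fst q"
  define L where "L = {v::real. \<forall>g\<in>G. \<forall>\<beta>>0. \<not> negg (\<lambda>\<omega>. g \<omega> + \<beta> * I \<omega> * (X \<omega> - v))}"
  define U where "U = {v::real. \<forall>g\<in>G. \<forall>\<beta><0. \<not> negg (\<lambda>\<omega>. g \<omega> + \<beta> * I \<omega> * (X \<omega> - v))}"
  have I01: "\<forall>\<omega>. I \<omega> = 0 \<or> I \<omega> = 1" unfolding I_def by (simp add: indicator_def)
  have Gneg: "\<not> negg g" if "g \<in> G" for g
    using that coh unfolding G_def gams_def coh_iff by blast
  have Gadd: "(\<lambda>\<omega>. g1 \<omega> + g2 \<omega>) \<in> G" if gg: "g1 \<in> G" "g2 \<in> G" for g1 g2
  proof -
    obtain S1 a1 c1 S2 a2 c2 where "adm E Q S1 a1 c1" "g1 = gam S1 a1 c1" "adm E Q S2 a2 c2" "g2 = gam S2 a2 c2"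
      using gg unfolding G_def gams_def by blast
    with adm_add[of E Q S1 a1 c1 S2 a2 c2] show ?thesis unfolding G_def gams_def by fastforce
  qed
  have Gscale: "(\<lambda>\<omega>. t * g \<omega>) \<in> G" if gt: "g \<in> G" "t > 0" for g t
  proof -
    obtain S a c where "adm E Q S a c" "g = gam S a c"
      using gt unfolding G_def gams_def by blast
    with adm_scale[OF gt(2), of E Q S a c] gam_scale[of S t a c] show ?thesis
      unfolding G_def gams_def by (intro CollectI exI[of _ S] exI[of _ "\<lambda>p. t * a p"] exI[of _ c]) auto
  qed
  have cover: "v \<in> L \<or> v \<in> U" for v
  proof (rule ccontr)
    assume "\<not> (v \<in> L \<or> v \<in> U)"
    then obtain g1 b1 e1 g2 b2 e2 where g1: "g1 \<in> G" "b1 > 0" "e1 > 0" "\<forall>\<omega>. g1 \<omega> + b1 * I \<omega> * (X \<omega> - v) \<le> -e1"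
      and g2: "g2 \<in> G" "b2 < 0" "e2 > 0" "\<forall>\<omega>. g2 \<omega> + b2 * I \<omega> * (X \<omega> - v) \<le> -e2"
      unfolding L_def U_def negg_def by blast
    define g where "g = (\<lambda>\<omega>. (-b2) * g1 \<omega> + b1 * g2 \<omega>)"
    have "g \<in> G" unfolding g_def using g1 g2 by (intro Gadd Gscale) auto
    moreover have "negg g" unfolding negg_def
    proof (intro exI[of _ "(-b2) * e1 + b1 * e2"] conjI allI)
      show "0 < (-b2) * e1 + b1 * e2" using g1 g2 by (intro add_pos_pos mult_pos_pos) auto
      fix \<omega>
      define k where "k = I \<omega> * (X \<omega> - v)"
      have h1: "(-b2) * (g1 \<omega> + b1 * k) \<le> (-b2) * (-e1)"
        using g1 g2 by (intro mult_left_mono) (auto simp: k_def mult.assoc)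
      have h2: "b1 * (g2 \<omega> + b2 * k) \<le> b1 * (-e2)"
        using g1 g2 by (intro mult_left_mono) (auto simp: k_def mult.assoc)
      have "(-b2) * (g1 \<omega> + b1 * k) + b1 * (g2 \<omega> + b2 * k) = g \<omega>"
        unfolding g_def by (simp add: algebra_simps)
      with h1 h2 show "g \<omega> \<le> - ((-b2) * e1 + b1 * e2)" by (simp add: algebra_simps)
    qed
    ultimately show False using Gneg by blast
  qed
  have closedL: "closed L"
    unfolding closed_def open_dist
  proof (intro ballI)
    fix x assume "x \<in> - L"
    then obtain g b e where h: "g \<in> G" "b > 0" "e > 0" "\<forall>\<omega>. g \<omega> + b * I \<omega> * (X \<omega> - x) \<le> -e"
      unfolding L_def negg_def by blast
    show "\<exists>r>0. \<forall>y. dist y x < r \<longrightarrow> y \<in> - L"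
    proof (intro exI[of _ "e/(2*\<bar>b\<bar>)"] conjI allI impI)
      show "0 < e/(2*\<bar>b\<bar>)" using h by (intro divide_pos_pos) auto
      fix y assume "dist y x < e/(2*\<bar>b\<bar>)"
      hence "\<forall>\<omega>. g \<omega> + b * I \<omega> * (X \<omega> - y) \<le> -(e/2)"
        using h I01 by (intro pert) (auto simp: dist_real_def)
      hence "negg (\<lambda>\<omega>. g \<omega> + b * I \<omega> * (X \<omega> - y))" unfolding negg_def using h
        by (intro exI[of _ "e/2"]) auto
      thus "y \<in> - L" unfolding L_def using h by auto
    qed
  qed
  have closedU: "closed U"
    unfolding closed_def open_dist
  proof (intro ballI)
    fix x assume "x \<in> - U"
    then obtain g b e where h: "g \<in> G" "b < 0" "e > 0" "\<forall>\<omega>. g \<omega> + b * I \<omega> * (X \<omega> - x) \<le> -e"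
      unfolding U_def negg_def by blast
    show "\<exists>r>0. \<forall>y. dist y x < r \<longrightarrow> y \<in> - U"
    proof (intro exI[of _ "e/(2*\<bar>b\<bar>)"] conjI allI impI)
      show "0 < e/(2*\<bar>b\<bar>)" using h by (intro divide_pos_pos) auto
      fix y assume "dist y x < e/(2*\<bar>b\<bar>)"
      hence "\<forall>\<omega>. g \<omega> + b * I \<omega> * (X \<omega> - y) \<le> -(e/2)"
        using h I01 by (intro pert) (auto simp: dist_real_def)
      hence "negg (\<lambda>\<omega>. g \<omega> + b * I \<omega> * (X \<omega> - y))" unfolding negg_def using h
        by (intro exI[of _ "e/2"]) auto
      thus "y \<in> - U" unfolding U_def using h by auto
    qed
  qed
  have Hform: "\<forall>g\<in>gams E Q. \<forall>a cq. (v = \<infinity> \<longrightarrow> a \<ge> 0) \<longrightarrow> (v = -\<infinity> \<longrightarrow> a \<le> 0)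
       \<longrightarrow> (v \<noteq> \<infinity> \<and> v \<noteq> -\<infinity> \<longrightarrow> ereal cq = v)
       \<longrightarrow> \<not> negg (\<lambda>\<omega>. g \<omega> + a * indicator (snd q) \<omega> * (fst q \<omega> - cq))"
    if hp: "\<And>cq. v \<noteq> \<infinity> \<and> v \<noteq> -\<infinity> \<Longrightarrow> ereal cq = v \<Longrightarrow> cq \<in> L \<inter> U"
       and hinf: "v = \<infinity> \<Longrightarrow> L = UNIV" and hminf: "v = -\<infinity> \<Longrightarrow> U = UNIV" for v
  proof (intro ballI allI impI)
    fix g and a cq :: real assume g: "g \<in> gams E Q" and c1: "v = \<infinity> \<longrightarrow> a \<ge> 0" and c2: "v = -\<infinity> \<longrightarrow> a \<le> 0"
      and c3: "v \<noteq> \<infinity> \<and> v \<noteq> -\<infinity> \<longrightarrow> ereal cq = v"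
    have gG: "g \<in> G" using g unfolding G_def .
    show "\<not> negg (\<lambda>\<omega>. g \<omega> + a * indicator (snd q) \<omega> * (fst q \<omega> - cq))"
    proof (cases "a = 0")
      case True thus ?thesis using Gneg[OF gG] by simp
    next
      case False
      have "cq \<in> L \<inter> U \<or> (a > 0 \<and> cq \<in> L) \<or> (a < 0 \<and> cq \<in> U)"
        using hp hinf hminf c1 c2 c3 False by (cases v) force+
      thus ?thesis using gG False unfolding L_def U_def I_def X_def
        by (cases "a > 0") (auto simp: not_less less_le)
    qed
  qed
  show ?thesis
  proof (cases "L \<inter> U = {}")
    case False
    then obtain r where r: "r \<in> L \<inter> U" by blast
    have "coherent1 (insert q E) (Q(q:=ereal r))"
      by (rule ext_coh[OF coh q Hform]) (use r in auto)
    thus ?thesis by blast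
  next
    case True
    show ?thesis
    proof (cases "L = UNIV")
      case True
      have "coherent1 (insert q E) (Q(q:=\<infinity>))"
        by (rule ext_coh[OF coh q Hform]) (use True in auto)
      thus ?thesis by blast
    next
      case nL: False
      show ?thesis
      proof (cases "U = UNIV")
        case True
        have "coherent1 (insert q E) (Q(q:=-\<infinity>))"
          by (rule ext_coh[OF coh q Hform]) (use True in auto)
        thus ?thesis by blast
      next
        case nU: False
        have "L \<inter> UNIV = {} \<or> U \<inter> UNIV = {}"
          by (rule connected_closedD[OF connected_UNIV _ _ closedL closedU]) (use True cover in auto)
        hence False using nL nU cover by auto
        thus ?thesis ..
      qed
    qed
  qed
qed


lemma adm_cong: "adm E1 Q1 S \<alpha> c \<Longrightarrow> S \<subseteq> E2 \<Longrightarrow> (\<forall>p\<in>S. Q1 p = Q2 p) \<Longrightarrow> adm E2 Q2 S \<alpha> c"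
  unfolding adm_def by auto

definition fnR :: "('a \<times> 'b) set \<Rightarrow> 'a \<Rightarrow> 'b" where "fnR R p = (THE v. (p,v) \<in> R)"

definition functional :: "('a \<times> 'b) set \<Rightarrow> bool" where
  "functional R \<longleftrightarrow> (\<forall>p v w. (p,v) \<in> R \<longrightarrow> (p,w) \<in> R \<longrightarrow> v = w)"

lemma fnR_eq: "functional R \<Longrightarrow> (p,v) \<in> R \<Longrightarrow> fnR R p = v"
  unfolding fnR_def functional_def by (rule the_equality) auto

theorem theorem7p1:
  fixes D F :: "(('w \<Rightarrow> real) \<times> 'w set) set"
    and P :: "('w \<Rightarrow> real) \<times> 'w set \<Rightarrow> ereal"
  assumes "\<forall>p\<in>D. snd p \<noteq> {}"
    and "coherent1 D P"
    and "\<forall>c::real. ((\<lambda>_. c), UNIV) \<in> D"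
    and "D \<subseteq> F"
    and "\<forall>p\<in>F. snd p \<noteq> {}"
  shows "\<exists>P'. (\<forall>p\<in>D. P' p = P p) \<and> coherent1 F P'"
proof -
  define A where "A = {R. functional R \<and> Domain R \<subseteq> F \<and> (\<forall>p\<in>D. (p, P p) \<in> R)
     \<and> coherent1 (Domain R) (fnR R)}"
  define R0 where "R0 = (\<lambda>p. (p, P p)) ` D"
  have fR0: "functional R0" unfolding R0_def functional_def by auto
  have dR0: "Domain R0 = D" unfolding R0_def by auto
  have R0A: "R0 \<in> A" unfolding A_def
  proof (intro CollectI conjI ballI fR0)
    show "Domain R0 \<subseteq> F" using dR0 assms(4) by simp
    show "(p, P p) \<in> R0" if "p \<in> D" for p using that unfolding R0_def by auto
    show "coherent1 (Domain R0) (fnR R0)" unfolding dR0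
      by (rule coh_cong[OF assms(2)]) (rule fnR_eq[OF fR0, symmetric], auto simp: R0_def)
  qed
  have "\<forall>C\<in>chains A. \<exists>U\<in>A. \<forall>X\<in>C. X \<subseteq> U"
  proof
    fix C assume C: "C \<in> chains A"
    have CA: "C \<subseteq> A" using C unfolding chains_def by auto
    show "\<exists>U\<in>A. \<forall>X\<in>C. X \<subseteq> U"
    proof (cases "C = {}")
      case True thus ?thesis using R0A by auto
    next
      case ne: False
      have fU: "functional (\<Union>C)" unfolding functional_def
      proof (intro allI impI)
        fix p v w assume "(p,v) \<in> \<Union>C" "(p,w) \<in> \<Union>C"
        then obtain R1 R2 where r: "R1 \<in> C" "R2 \<in> C" "(p,v) \<in> R1" "(p,w) \<in> R2" by auto
        from chainsD[OF C r(1,2)] have "R1 \<subseteq> R2 \<or> R2 \<subseteq> R1" .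
        thus "v = w" using r CA unfolding A_def functional_def by blast
      qed
      have fnU: "fnR (\<Union>C) p = fnR R p" if RR: "R \<in> C" "p \<in> Domain R" for R p
      proof -
        obtain v where v: "(p,v) \<in> R" using RR by auto
        have "functional R" using RR CA unfolding A_def by auto
        with v fU RR show ?thesis by (metis UnionI fnR_eq)
      qed
      have "\<Union>C \<in> A" unfolding A_def
      proof (intro CollectI conjI ballI fU)
        show "Domain (\<Union>C) \<subseteq> F" using CA unfolding A_def by auto
        show "(p, P p) \<in> \<Union>C" if "p \<in> D" for p using that CA ne unfolding A_def by blast
        show "coherent1 (Domain (\<Union>C)) (fnR (\<Union>C))" unfolding coh_iff
        proof (intro allI impI)
          fix S \<alpha> c assume ad: "adm (Domain (\<Union>C)) (fnR (\<Union>C)) S \<alpha> c"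
          have "finite S" "S \<subseteq> \<Union>(Domain ` C)" using ad unfolding adm_def by (auto simp: Domain_Union)
          moreover have "Domain ` C \<noteq> {}" using ne by auto
          moreover have "chain\<^sub>\<subseteq> (Domain ` C)"
            unfolding chain_subset_def
          proof (intro ballI)
            fix x y assume "x \<in> Domain ` C" "y \<in> Domain ` C"
            then obtain R1 R2 where "R1 \<in> C" "R2 \<in> C" "x = Domain R1" "y = Domain R2" by blast
            with chainsD[OF C \<open>R1 \<in> C\<close> \<open>R2 \<in> C\<close>] show "x \<subseteq> y \<or> y \<subseteq> x"
              using Domain_mono by blast
          qed
          hence "subset.chain UNIV (Domain ` C)" by (simp add: chain_subset_alt_def)
          ultimately obtain DR where "DR \<in> Domain ` C" "S \<subseteq> DR" by (rule finite_subset_Union_chain)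
          then obtain R where R: "R \<in> C" "S \<subseteq> Domain R" by auto
          have "adm (Domain R) (fnR R) S \<alpha> c"
            by (rule adm_cong[OF ad R(2)]) (use fnU R in blast)
          moreover have "coherent1 (Domain R) (fnR R)" using R CA unfolding A_def by auto
          ultimately show "\<not> negg (gam S \<alpha> c)" unfolding coh_iff by blast
        qed
      qed
      thus ?thesis by blast
    qed
  qed
  from Zorn_Lemma2[OF this] obtain M where M: "M \<in> A" and max: "\<forall>X\<in>A. M \<subseteq> X \<longrightarrow> X = M" by blast
  have fM: "functional M" and cM: "coherent1 (Domain M) (fnR M)" and dM: "Domain M \<subseteq> F"
    and DM: "\<forall>p\<in>D. (p, P p) \<in> M" using M unfolding A_def by auto
  have "Domain M = F"
  proof (rule ccontr)
    assume "Domain M \<noteq> F"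
    with dM obtain q where q: "q \<in> F" "q \<notin> Domain M" by auto
    from step[OF cM q(2)] obtain v where v: "coherent1 (insert q (Domain M)) ((fnR M)(q:=v))" by blast
    define M' where "M' = insert (q,v) M"
    have fM': "functional M'" using fM q(2) unfolding M'_def functional_def by auto
    have dM': "Domain M' = insert q (Domain M)" unfolding M'_def by auto
    have "M' \<in> A" unfolding A_def
    proof (intro CollectI conjI ballI fM')
      show "Domain M' \<subseteq> F" using dM' dM q by auto
      show "(p, P p) \<in> M'" if "p \<in> D" for p using DM that unfolding M'_def by auto
      show "coherent1 (Domain M') (fnR M')" unfolding dM'
      proof (rule coh_cong[OF v])
        fix p assume p: "p \<in> insert q (Domain M)"
        show "((fnR M)(q:=v)) p = fnR M' p"
        proof (cases "p = q")
          case True thus ?thesis using fnR_eq[OF fM', of q v] by (simp add: M'_def)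
        next
          case False
          then obtain w where "(p,w) \<in> M" using p by auto
          thus ?thesis using False fnR_eq[OF fM, of p w] fnR_eq[OF fM', of p w] by (simp add: M'_def)
        qed
      qed
    qed
    moreover have "M \<subseteq> M'" unfolding M'_def by auto
    ultimately have "M' = M" using max by blast
    hence "(q,v) \<in> M" unfolding M'_def by auto
    with q show False by auto
  qed
  show ?thesis
  proof (intro exI[of _ "fnR M"] conjI ballI)
    show "fnR M p = P p" if "p \<in> D" for p using fnR_eq[OF fM] DM that by blast
    show "coherent1 F (fnR M)" using cM \<open>Domain M = F\<close> by simp
  qed
qed

end
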